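(* Let $\bm X=X_1\times\cdots\times X_n\in\mathbb{IR}^n$ with $\operatorname{wid}(X_i)>0$ for at least one $i$; define $\mathcal P=\{j:\operatorname{wid}(X_j)>0\}$, $\theta_i=\operatorname{wid}(X_i)/\sum_{j\in\mathcal P}\operatorname{wid}(X_j)$ for $i\in\mathcal P$, $\underline\sigma=\sum_i\underline X_i$, $\overline\sigma=\sum_i\overline X_i$. Let $\varphi:[\underline\sigma,\overline\sigma]\to\mathbb{R}$ be convex and let $\sigma^\ast\in[\underline\sigma,\overline\sigma]$ be a minimizer of $\varphi$ on $[\underline\sigma,\overline\sigma]$. Define, for $i\in\mathcal P$ and $x_i\in X_i$, $$f^{\rm u}_i(x_i)=\varphi\big(\min\{x_i-\overline X_i+\overline\sigma,\sigma^\ast\}\big)+\varphi\big(\max\{x_i-\underline X_i+\underline\sigma,\sigma^\ast\}\big)-(2-\theta_i)\varphi(\sigma^\ast),$$ and $f^{\rm u}_i\equiv 0$ for $i\notin\mathcal P$. Then (i) $\sum_{i=1}^n f^{\rm u}_i(x_i)\le\varphi\big(\sum_{i=1}^n x_i\big)$ for all $\bm x\in\bm X$; and (ii) $\sum_{i=1}^n f^{\rm u}_i(x_i)=\varphi(\sigma^\ast)$ at every $\bm x\in\bm X$ satisfying $x_i\in[\sigma^\ast+\overline X_i-\overline\sigma,\ \sigma^\ast+\underline X_i-\underline\sigma]$ for all $i$.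
   Context: $\mathbb{IR}^n$ is the set of boxes $\bm X=X_1\times\cdots\times X_n$ with $X_i=[\underline X_i,\overline X_i]$ compact real intervals; $\operatorname{wid}(X_i)=\overline X_i-\underline X_i$. *)

theory Defs
  imports "HOL-Analysis.Analysis"
begin

text \<open>A box X = X_0 x ... x X_{n-1} is given by lower endpoints lo and upper endpoints hi
  (indices i < n). wid(X_i) = hi i - lo i.\<close>

definition wid_box :: "(nat \<Rightarrow> real) \<Rightarrow> (nat \<Rightarrow> real) \<Rightarrow> nat \<Rightarrow> real" where
  "wid_box lo hi i = hi i - lo i"

definition posidx :: "nat \<Rightarrow> (nat \<Rightarrow> real) \<Rightarrow> (nat \<Rightarrow> real) \<Rightarrow> nat set" where
  "posidx n lo hi = {j. j < n \<and> wid_box lo hi j > 0}"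

definition theta :: "nat \<Rightarrow> (nat \<Rightarrow> real) \<Rightarrow> (nat \<Rightarrow> real) \<Rightarrow> nat \<Rightarrow> real" where
  "theta n lo hi i = wid_box lo hi i / (\<Sum>j\<in>posidx n lo hi. wid_box lo hi j)"

definition sig_lo :: "nat \<Rightarrow> (nat \<Rightarrow> real) \<Rightarrow> real" where
  "sig_lo n lo = (\<Sum>i<n. lo i)"

definition sig_hi :: "nat \<Rightarrow> (nat \<Rightarrow> real) \<Rightarrow> real" where
  "sig_hi n hi = (\<Sum>i<n. hi i)"

definition fu :: "nat \<Rightarrow> (nat \<Rightarrow> real) \<Rightarrow> (nat \<Rightarrow> real) \<Rightarrow> (real \<Rightarrow> real) \<Rightarrow> real \<Rightarrow> nat \<Rightarrow> real \<Rightarrow> real" where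
  "fu n lo hi \<phi> s i x =
     (if i \<in> posidx n lo hi then
        \<phi> (min (x - hi i + sig_hi n hi) s) + \<phi> (max (x - lo i + sig_lo n lo) s)
          - (2 - theta n lo hi i) * \<phi> s
      else 0)"

end

theory Submission imports Defs begin

lemma overflow_sum:
  fixes v :: "nat \<Rightarrow> real"
  assumes "finite A" "c \<ge> 0" "\<forall>i\<in>A. v i \<ge> 0"
  shows "(\<Sum>i\<in>A. max (v i - c) 0) \<le> max ((\<Sum>i\<in>A. v i) - c) 0"
  using assms
proof (induction A rule: finite_induct)
  case empty then show ?case by simp
next
  case (insert a A)
  have IH: "(\<Sum>i\<in>A. max (v i - c) 0) \<le> max ((\<Sum>i\<in>A. v i) - c) 0"
    using insert by auto
  have "(\<Sum>i\<in>A. v i) \<ge> 0" using insert by (auto intro: sum_nonneg)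
  moreover have "v a \<ge> 0" using insert by auto
  ultimately show ?case using insert(1,2) insert.prems IH
    by (simp add: sum.insert del: max_def) (smt (verit))
qed

lemma chord_sum:
  fixes \<phi> :: "real \<Rightarrow> real" and t :: "nat \<Rightarrow> real"
  assumes cvx: "convex_on {L..H} \<phi>" and sm: "s \<in> {L..H}"
    and smin: "\<forall>y\<in>{L..H}. \<phi> s \<le> \<phi> y"
    and fin: "finite P" and tnn: "\<forall>i\<in>P. t i \<ge> 0" and tT: "(\<Sum>i\<in>P. t i) \<le> T"
    and zm: "s + e * T \<in> {L..H}"
  shows "(\<Sum>i\<in>P. \<phi> (s + e * t i) - \<phi> s) \<le> \<phi> (s + e * T) - \<phi> s"
proof (cases "T = 0")
  case True
  have "(\<Sum>i\<in>P. t i) = 0" using tT True tnn by (smt (verit) sum_nonneg)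
  then have "\<forall>i\<in>P. t i = 0" using sum_nonneg_eq_0_iff[OF fin] tnn by blast
  then show ?thesis using True by simp
next
  case False
  have "(\<Sum>i\<in>P. t i) \<ge> 0" using tnn by (simp add: sum_nonneg)
  then have T0: "T > 0" using False tT by linarith
  define D where "D = \<phi> (s + e * T) - \<phi> s"
  have D0: "D \<ge> 0" using smin zm D_def by auto
  have each: "\<phi> (s + e * t i) - \<phi> s \<le> (t i / T) * D" if i: "i \<in> P" for i
  proof -
    have ti: "t i \<le> T" using member_le_sum[OF i, of t] tnn fin tT by auto
    have "\<phi> ((1 - t i / T) *\<^sub>R s + (t i / T) *\<^sub>R (s + e * T)) \<le> (1 - t i / T) * \<phi> s + (t i / T) * \<phi> (s + e * T)"
      by (rule convex_onD[OF cvx]) (use ti T0 tnn i sm zm in auto)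
    moreover have "(1 - t i / T) *\<^sub>R s + (t i / T) *\<^sub>R (s + e * T) = s + e * t i"
      using T0 by (simp add: field_simps)
    ultimately show ?thesis by (simp add: D_def algebra_simps)
  qed
  have "(\<Sum>i\<in>P. \<phi> (s + e * t i) - \<phi> s) \<le> (\<Sum>i\<in>P. (t i / T) * D)"
    using each by (rule sum_mono)
  also have "\<dots> = ((\<Sum>i\<in>P. t i) / T) * D" by (simp add: sum_distrib_right sum_divide_distrib)
  also have "\<dots> \<le> 1 * D" using T0 tT D0 by (intro mult_right_mono) auto
  finally show ?thesis by (simp add: D_def)
qed

theorem mainTheorem5:
  fixes n :: nat and lo hi :: "nat \<Rightarrow> real" and \<phi> :: "real \<Rightarrow> real" and s :: real
  assumes box: "\<forall>i<n. lo i \<le> hi i"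
    and somepos: "\<exists>i<n. wid_box lo hi i > 0"
    and cvx: "convex_on {sig_lo n lo .. sig_hi n hi} \<phi>"
    and smem: "s \<in> {sig_lo n lo .. sig_hi n hi}"
    and smin: "\<forall>t\<in>{sig_lo n lo .. sig_hi n hi}. \<phi> s \<le> \<phi> t"
  shows "(\<forall>x. (\<forall>i<n. x i \<in> {lo i .. hi i}) \<longrightarrow>
            (\<Sum>i<n. fu n lo hi \<phi> s i (x i)) \<le> \<phi> (\<Sum>i<n. x i))
       \<and> (\<forall>x. (\<forall>i<n. x i \<in> {lo i .. hi i}
                 \<and> x i \<in> {s + hi i - sig_hi n hi .. s + lo i - sig_lo n lo}) \<longrightarrow>
            (\<Sum>i<n. fu n lo hi \<phi> s i (x i)) = \<phi> s)"
proof -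
  define L where "L = sig_lo n lo"
  define H where "H = sig_hi n hi"
  define P where "P = posidx n lo hi"
  have PS: "P \<subseteq> {..<n}" by (auto simp: P_def posidx_def)
  have finP: "finite P" using PS finite_subset by blast
  have thsum: "(\<Sum>i\<in>P. theta n lo hi i) = 1"
  proof -
    obtain k where k: "k < n" "wid_box lo hi k > 0" using somepos by blast
    have kP: "k \<in> P" using k by (simp add: P_def posidx_def)
    have "(\<Sum>j\<in>P. wid_box lo hi j) \<ge> wid_box lo hi k"
      by (rule member_le_sum[OF kP]) (auto simp: P_def posidx_def finP)
    then have "(\<Sum>j\<in>P. wid_box lo hi j) > 0" using k by linarith
    then show ?thesis unfolding theta_def P_def[symmetric]
      by (simp add: sum_divide_distrib[symmetric])
  qed
  define \<alpha> where "\<alpha> x i = max ((hi i - x i) - (H - s)) 0" for x :: "nat \<Rightarrow> real" and i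
  define \<beta> where "\<beta> x i = max ((x i - lo i) - (s - L)) 0" for x :: "nat \<Rightarrow> real" and i
  have red: "(\<Sum>i<n. fu n lo hi \<phi> s i (x i)) =
     (\<Sum>i\<in>P. \<phi> (s + (-1) * \<alpha> x i) - \<phi> s) + (\<Sum>i\<in>P. \<phi> (s + 1 * \<beta> x i) - \<phi> s) + \<phi> s" for x
  proof -
    have "(\<Sum>i<n. fu n lo hi \<phi> s i (x i)) = (\<Sum>i\<in>P. fu n lo hi \<phi> s i (x i))"
      by (rule sum.mono_neutral_right) (use PS in \<open>auto simp: fu_def P_def\<close>)
    also have "\<dots> = (\<Sum>i\<in>P. (\<phi> (s + (-1) * \<alpha> x i) - \<phi> s) + (\<phi> (s + 1 * \<beta> x i) - \<phi> s)
                       + theta n lo hi i * \<phi> s)"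
    proof (rule sum.cong[OF refl])
      fix i assume "i \<in> P"
      have a: "\<phi> (min (x i - hi i + H) s) = \<phi> (s + (-1) * \<alpha> x i)"
        by (rule arg_cong[where f=\<phi>]) (simp add: \<alpha>_def min_def max_def)
      have b: "\<phi> (max (x i - lo i + L) s) = \<phi> (s + 1 * \<beta> x i)"
        by (rule arg_cong[where f=\<phi>]) (simp add: \<beta>_def max_def)
      show "fu n lo hi \<phi> s i (x i) = (\<phi> (s + (-1) * \<alpha> x i) - \<phi> s) + (\<phi> (s + 1 * \<beta> x i) - \<phi> s)
                       + theta n lo hi i * \<phi> s"
        unfolding fu_def P_def[symmetric] L_def[symmetric] H_def[symmetric]
        using \<open>i \<in> P\<close> by (simp only: if_True a b) (simp add: algebra_simps)
    qed
    also have "\<dots> = (\<Sum>i\<in>P. \<phi> (s + (-1) * \<alpha> x i) - \<phi> s) + (\<Sum>i\<in>P. \<phi> (s + 1 * \<beta> x i) - \<phi> s)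
          + (\<Sum>i\<in>P. theta n lo hi i) * \<phi> s"
      by (simp only: sum.distrib sum_distrib_right)
    finally show ?thesis using thsum by simp
  qed
  have part1: "(\<Sum>i<n. fu n lo hi \<phi> s i (x i)) \<le> \<phi> (\<Sum>i<n. x i)"
    if xm: "\<forall>i<n. x i \<in> {lo i .. hi i}" for x
  proof -
    define \<sigma> where "\<sigma> = (\<Sum>i<n. x i)"
    have sL: "L \<le> \<sigma>" unfolding L_def sig_lo_def \<sigma>_def by (rule sum_mono) (use xm in auto)
    have sH: "\<sigma> \<le> H" unfolding H_def sig_hi_def \<sigma>_def by (rule sum_mono) (use xm in auto)
    have Hs: "H - \<sigma> = (\<Sum>i<n. hi i - x i)" by (simp add: H_def sig_hi_def \<sigma>_def sum_subtractf)
    have sL2: "\<sigma> - L = (\<Sum>i<n. x i - lo i)" by (simp add: L_def sig_lo_def \<sigma>_def sum_subtractf)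
    have A1: "(\<Sum>i\<in>P. hi i - x i) \<le> H - \<sigma>"
      unfolding Hs by (rule sum_mono2) (use PS xm in auto)
    have B1: "(\<Sum>i\<in>P. x i - lo i) \<le> \<sigma> - L"
      unfolding sL2 by (rule sum_mono2) (use PS xm in auto)
    have A2: "(\<Sum>i\<in>P. \<alpha> x i) \<le> max (s - \<sigma>) 0"
    proof -
      have "(\<Sum>i\<in>P. \<alpha> x i) \<le> max ((\<Sum>i\<in>P. hi i - x i) - (H - s)) 0"
        unfolding \<alpha>_def by (rule overflow_sum) (use finP smem PS xm in \<open>auto simp: H_def\<close>)
      also have "\<dots> \<le> max (s - \<sigma>) 0" using A1 by simp
      finally show ?thesis .
    qed
    have B2: "(\<Sum>i\<in>P. \<beta> x i) \<le> max (\<sigma> - s) 0"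
    proof -
      have "(\<Sum>i\<in>P. \<beta> x i) \<le> max ((\<Sum>i\<in>P. x i - lo i) - (s - L)) 0"
        unfolding \<beta>_def by (rule overflow_sum) (use finP smem PS xm in \<open>auto simp: L_def\<close>)
      also have "\<dots> \<le> max (\<sigma> - s) 0" using B1 by simp
      finally show ?thesis .
    qed
    have smem': "s \<in> {L..H}" using smem by (simp add: L_def H_def)
    have A3: "(\<Sum>i\<in>P. \<phi> (s + (-1) * \<alpha> x i) - \<phi> s) \<le> \<phi> (s + (-1) * max (s - \<sigma>) 0) - \<phi> s"
      by (rule chord_sum[OF cvx[folded L_def H_def] smem' smin[folded L_def H_def] finP _ A2])
         (use sL sH smem' in \<open>auto simp: \<alpha>_def max_def\<close>)
    have B3: "(\<Sum>i\<in>P. \<phi> (s + 1 * \<beta> x i) - \<phi> s) \<le> \<phi> (s + 1 * max (\<sigma> - s) 0) - \<phi> s"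
      by (rule chord_sum[OF cvx[folded L_def H_def] smem' smin[folded L_def H_def] finP _ B2])
         (use sL sH smem' in \<open>auto simp: \<beta>_def max_def\<close>)
    have "\<phi> (s + (-1) * max (s - \<sigma>) 0) - \<phi> s + (\<phi> (s + 1 * max (\<sigma> - s) 0) - \<phi> s) + \<phi> s = \<phi> \<sigma>"
      by (cases "s \<le> \<sigma>") (auto simp: max_def)
    then show ?thesis using red[of x] A3 B3 unfolding \<sigma>_def by linarith
  qed
  have part2: "(\<Sum>i<n. fu n lo hi \<phi> s i (x i)) = \<phi> s"
    if xm: "\<forall>i<n. x i \<in> {lo i .. hi i} \<and> x i \<in> {s + hi i - sig_hi n hi .. s + lo i - sig_lo n lo}" for x
  proof -
    have "\<forall>i\<in>P. \<alpha> x i = 0 \<and> \<beta> x i = 0"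
      using xm PS by (force simp: \<alpha>_def \<beta>_def L_def H_def)
    then show ?thesis using red[of x] by simp
  qed
  show ?thesis using part1 part2 by blast
qed

end
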